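(* For every finite simple graph $G$, $\chi_{DP}(G) \le 2\,AT(G)$.
   Context: Correspondence chromatic number: a correspondence assignment $(L,C)$ for $G$ consists of a list $L(v)$ for each vertex and, for each edge $uv$, a partial matching $C_{uv}$ between $\{u\}\times L(u)$ and $\{v\}\times L(v)$; an $(L,C)$-coloring is a choice $\phi(v)\in L(v)$ for all $v$ such that for every edge $uv$, $(u,\phi(u))$ and $(v,\phi(v))$ are not matched in $C_{uv}$; $\chi_{DP}(G)$ is the least $k$ such that $G$ has an $(L,C)$-coloring for every correspondence assignment with all lists of size $k$. Alon--Tarsi number: for a digraph $D$, an Eulerian subdigraph is a spanning subdigraph $F$ with $d^+_F(v)=d^-_F(v)$ for all $v$, even or odd according to the parity of its number of edges; $AT(G)$ is the minimum $k$ such that some orientation $D$ of $G$ has all outdegrees less than $k$ and the numbers of even and odd Eulerian subdigraphs of $D$ differ. *)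

theory Defs
  imports Main
begin

definition simple_graph :: "'a set \<Rightarrow> 'a set set \<Rightarrow> bool" where
  "simple_graph V E \<longleftrightarrow> finite V \<and>
     (\<forall>e\<in>E. \<exists>u v. u \<noteq> v \<and> u \<in> V \<and> v \<in> V \<and> e = {u, v})"

text \<open>Correspondence assignment (L, C): L v is a finite list of colours of size k;
  for adjacent u, v, C u v is a partial matching between L u and L v
  (a pair (c, d) in C u v means that (u, c) is matched with (v, d));
  C v u is the same matching read from the other side.\<close>
definition corr_assignment ::
  "'a set \<Rightarrow> 'a set set \<Rightarrow> nat \<Rightarrow> ('a \<Rightarrow> nat set) \<Rightarrow> ('a \<Rightarrow> 'a \<Rightarrow> (nat \<times> nat) set) \<Rightarrow> bool" where
  "corr_assignment V E k L C \<longleftrightarrow>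
     (\<forall>v\<in>V. finite (L v) \<and> card (L v) = k) \<and>
     (\<forall>u v. {u, v} \<in> E \<longrightarrow>
        C u v \<subseteq> L u \<times> L v \<and>
        C v u = converse (C u v) \<and>
        (\<forall>c d d'. (c, d) \<in> C u v \<and> (c, d') \<in> C u v \<longrightarrow> d = d') \<and>
        (\<forall>c c' d. (c, d) \<in> C u v \<and> (c', d) \<in> C u v \<longrightarrow> c = c'))"

definition corr_coloring ::
  "'a set \<Rightarrow> 'a set set \<Rightarrow> ('a \<Rightarrow> nat set) \<Rightarrow> ('a \<Rightarrow> 'a \<Rightarrow> (nat \<times> nat) set) \<Rightarrow> ('a \<Rightarrow> nat) \<Rightarrow> bool" where
  "corr_coloring V E L C \<phi> \<longleftrightarrow>
     (\<forall>v\<in>V. \<phi> v \<in> L v) \<and>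
     (\<forall>u v. {u, v} \<in> E \<longrightarrow> (\<phi> u, \<phi> v) \<notin> C u v)"

definition chi_DP :: "'a set \<Rightarrow> 'a set set \<Rightarrow> nat" where
  "chi_DP V E = (LEAST k. \<forall>L C. corr_assignment V E k L C \<longrightarrow>
                     (\<exists>\<phi>. corr_coloring V E L C \<phi>))"

definition orientation :: "'a set set \<Rightarrow> ('a \<times> 'a) set \<Rightarrow> bool" where
  "orientation E D \<longleftrightarrow>
     (\<forall>(u, v)\<in>D. u \<noteq> v \<and> {u, v} \<in> E) \<and>
     (\<forall>u v. u \<noteq> v \<and> {u, v} \<in> E \<longrightarrow> ((u, v) \<in> D \<longleftrightarrow> (v, u) \<notin> D))"

definition outdeg :: "('a \<times> 'a) set \<Rightarrow> 'a \<Rightarrow> nat" where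
  "outdeg F v = card {w. (v, w) \<in> F}"

definition indeg :: "('a \<times> 'a) set \<Rightarrow> 'a \<Rightarrow> nat" where
  "indeg F v = card {w. (w, v) \<in> F}"

definition eulerian_subdigraphs :: "'a set \<Rightarrow> ('a \<times> 'a) set \<Rightarrow> ('a \<times> 'a) set set" where
  "eulerian_subdigraphs V D = {F. F \<subseteq> D \<and> (\<forall>v\<in>V. outdeg F v = indeg F v)}"

definition even_eulerian :: "'a set \<Rightarrow> ('a \<times> 'a) set \<Rightarrow> nat" where
  "even_eulerian V D = card {F \<in> eulerian_subdigraphs V D. even (card F)}"

definition odd_eulerian :: "'a set \<Rightarrow> ('a \<times> 'a) set \<Rightarrow> nat" where
  "odd_eulerian V D = card {F \<in> eulerian_subdigraphs V D. odd (card F)}"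

definition AT :: "'a set \<Rightarrow> 'a set set \<Rightarrow> nat" where
  "AT V E = (LEAST k. \<exists>D. orientation E D \<and> (\<forall>v\<in>V. outdeg D v < k) \<and>
                         even_eulerian V D \<noteq> odd_eulerian V D)"

end

theory Submission
  imports Defs
begin

lemma sum_in_out:
  assumes "finite S"
  shows "(\<Sum>v\<in>S. card {u\<in>S. (u,v)\<in>D}) = (\<Sum>v\<in>S. card {u\<in>S. (v,u)\<in>D})"
proof -
  have "(\<Sum>v\<in>S. card {u\<in>S. (u,v)\<in>D}) = card (Sigma S (\<lambda>v. {u\<in>S. (u,v)\<in>D}))"
    using assms by (simp add: card_SigmaI)
  also have "\<dots> = card (prod.swap ` Sigma S (\<lambda>v. {u\<in>S. (u,v)\<in>D}))"
    by (simp add: card_image)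
  also have "prod.swap ` Sigma S (\<lambda>v. {u\<in>S. (u,v)\<in>D}) = Sigma S (\<lambda>v. {u\<in>S. (v,u)\<in>D})"
    by force
  also have "card \<dots> = (\<Sum>v\<in>S. card {u\<in>S. (v,u)\<in>D})"
    using assms by (simp add: card_SigmaI)
  finally show ?thesis .
qed

lemma exists_AT:
  assumes G: "simple_graph V E"
  shows "\<exists>k D. orientation E D \<and> (\<forall>v\<in>V. outdeg D v < k) \<and> even_eulerian V D \<noteq> odd_eulerian V D"
proof -
  have finV: "finite V" using G by (simp add: simple_graph_def)
  obtain f :: "'a \<Rightarrow> nat" where f: "inj_on f V"
    using finV finite_imp_inj_to_nat_seg by blast
  define D where "D = {(u,v). {u,v} \<in> E \<and> f u < f v}"
  have DV: "D \<subseteq> V \<times> V"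
    using G unfolding D_def simple_graph_def by (auto simp: doubleton_eq_iff)
  have finD: "finite D" using DV finV by (meson finite_SigmaI finite_subset)
  have ori: "orientation E D"
    unfolding orientation_def D_def
  proof (intro conjI allI impI)
    show "\<forall>(u, v)\<in>{(u, v). {u, v} \<in> E \<and> f u < f v}. u \<noteq> v \<and> {u, v} \<in> E" by auto
    fix u v assume uv: "u \<noteq> v \<and> {u, v} \<in> E"
    then have "u \<in> V" "v \<in> V" using G unfolding simple_graph_def by (auto simp: doubleton_eq_iff)
    then have "f u \<noteq> f v" using f uv by (meson inj_on_eq_iff)
    then show "((u, v) \<in> {(u, v). {u, v} \<in> E \<and> f u < f v}) = ((v, u) \<notin> {(u, v). {u, v} \<in> E \<and> f u < f v})"
      using uv by (auto simp: insert_commute)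
  qed
  have eul: "eulerian_subdigraphs V D = {{}}"
  proof
    show "{{}} \<subseteq> eulerian_subdigraphs V D"
      by (simp add: eulerian_subdigraphs_def outdeg_def indeg_def)
    show "eulerian_subdigraphs V D \<subseteq> {{}}"
    proof
      fix F assume "F \<in> eulerian_subdigraphs V D"
      then have FD: "F \<subseteq> D" and bal: "\<forall>v\<in>V. outdeg F v = indeg F v"
        by (auto simp: eulerian_subdigraphs_def)
      have finF: "finite F" using FD finD finite_subset by blast
      show "F \<in> {{}}"
      proof (rule ccontr)
        assume "F \<notin> {{}}"
        then have ne: "F \<noteq> {}" by auto
        define M where "M = Max (f ` snd ` F)"
        have "M \<in> f ` snd ` F" unfolding M_def using ne finF by auto
        then obtain x w where xw: "(x,w) \<in> F" "f w = M" by auto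
        have wV: "w \<in> V" using xw FD DV by auto
        have "x \<in> {y. (y,w) \<in> F}" using xw by auto
        moreover have "finite {y. (y,w) \<in> F}"
          using finite_subset[OF _ finV, of "{y. (y,w) \<in> F}"] FD DV by auto
        ultimately have "indeg F w > 0" unfolding indeg_def by (metis card_gt_0_iff empty_iff)
        then have "outdeg F w > 0" using bal wV by simp
        then obtain z where z: "(w,z) \<in> F" unfolding outdeg_def by (metis card.empty empty_Collect_eq less_irrefl)
        then have "f w < f z" using FD unfolding D_def by auto
        moreover have "f z \<le> M" unfolding M_def using z finF by (metis Max_ge finite_imageI image_eqI snd_conv)
        ultimately show False using xw by simp
      qed
    qed
  qed
  have "{F \<in> {{}}. even (card (F::('a\<times>'a) set))} = {{}}" by auto
  then have "even_eulerian V D = 1" unfolding even_eulerian_def eul by simp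
  moreover have "odd_eulerian V D = 0" unfolding odd_eulerian_def eul by simp
  moreover have "\<forall>v\<in>V. outdeg D v < Suc (card V)"
  proof
    fix v assume "v \<in> V"
    have "{w. (v,w) \<in> D} \<subseteq> V" using DV by auto
    then show "outdeg D v < Suc (card V)" unfolding outdeg_def using finV
      by (simp add: card_mono le_imp_less_Suc)
  qed
  ultimately show ?thesis using ori by (metis zero_neq_one)
qed

lemma degen:
  assumes G: "simple_graph V E" and ori: "orientation E D" and out: "\<forall>v\<in>V. outdeg D v < a"
    and S: "S \<subseteq> V" "S \<noteq> {}"
  shows "\<exists>v\<in>S. card {u\<in>S. {v,u} \<in> E} < 2*a"
proof (rule ccontr)
  assume "\<not> ?thesis"
  then have big: "\<forall>v\<in>S. 2*a \<le> card {u\<in>S. {v,u} \<in> E}" by auto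
  have finV: "finite V" using G by (simp add: simple_graph_def)
  have finS: "finite S" using S finV finite_subset by blast
  have nb: "{u\<in>S. {v,u} \<in> E} \<subseteq> {u\<in>S. (v,u)\<in>D} \<union> {u\<in>S. (u,v)\<in>D}" for v
  proof
    fix u assume u: "u \<in> {u\<in>S. {v,u} \<in> E}"
    have e: "{v,u} \<in> E" and uS: "u \<in> S" using u by auto
    have "u \<noteq> v"
    proof
      assume "u = v"
      then have "{v} \<in> E" using e by simp
      then obtain x y where "x \<noteq> y" "{v} = {x,y}" using G unfolding simple_graph_def by blast
      then show False by (auto simp: doubleton_eq_iff)
    qed
    have H: "\<forall>u v. u \<noteq> v \<and> {u, v} \<in> E \<longrightarrow> ((u, v) \<in> D \<longleftrightarrow> (v, u) \<notin> D)"
      using ori unfolding orientation_def by blast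
    have "(v,u) \<in> D \<or> (u,v) \<in> D" using H[rule_format, of v u] e \<open>u \<noteq> v\<close> by blast
    then show "u \<in> {u\<in>S. (v,u)\<in>D} \<union> {u\<in>S. (u,v)\<in>D}" using uS by blast
  qed
  have "(\<Sum>v\<in>S. 2*a) \<le> (\<Sum>v\<in>S. card {u\<in>S. {v,u} \<in> E})"
    using big by (intro sum_mono) auto
  also have "\<dots> \<le> (\<Sum>v\<in>S. card {u\<in>S. (v,u)\<in>D} + card {u\<in>S. (u,v)\<in>D})"
  proof (intro sum_mono)
    fix v assume "v \<in> S"
    have "card {u\<in>S. {v,u} \<in> E} \<le> card ({u\<in>S. (v,u)\<in>D} \<union> {u\<in>S. (u,v)\<in>D})"
      using nb finS by (intro card_mono) auto
    also have "\<dots> \<le> card {u\<in>S. (v,u)\<in>D} + card {u\<in>S. (u,v)\<in>D}" by (rule card_Un_le)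
    finally show "card {u\<in>S. {v,u} \<in> E} \<le> card {u\<in>S. (v,u)\<in>D} + card {u\<in>S. (u,v)\<in>D}" .
  qed
  also have "\<dots> = 2 * (\<Sum>v\<in>S. card {u\<in>S. (v,u)\<in>D})"
    using sum_in_out[OF finS, of D] by (simp add: sum.distrib)
  also have "\<dots> < 2 * (\<Sum>v\<in>S. a)"
  proof -
    have "(\<Sum>v\<in>S. card {u\<in>S. (v,u)\<in>D}) < (\<Sum>v\<in>S. a)"
    proof (rule sum_strict_mono)
      fix v assume v: "v \<in> S"
      have "finite {w. (v,w) \<in> D}"
      proof (rule finite_subset[OF _ finV])
        show "{w. (v,w) \<in> D} \<subseteq> V"
        proof
          fix w assume "w \<in> {w. (v,w) \<in> D}"
          then have "{v,w} \<in> E" using ori unfolding orientation_def by auto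
          then obtain x y where "x \<in> V" "y \<in> V" "{v,w} = {x,y}" using G unfolding simple_graph_def by blast
          then show "w \<in> V" by (auto simp: doubleton_eq_iff)
        qed
      qed
      then have "card {u\<in>S. (v,u)\<in>D} \<le> outdeg D v" unfolding outdeg_def by (intro card_mono) auto
      then show "card {u\<in>S. (v,u)\<in>D} < a" using out v S by fastforce
    qed (use finS S in auto)
    then show ?thesis by simp
  qed
  also have "\<dots> = (\<Sum>v\<in>S. 2*a)" by (simp add: sum_distrib_left)
  finally show False by simp
qed

lemma colorable:
  assumes G: "simple_graph V E" and ori: "orientation E D" and out: "\<forall>v\<in>V. outdeg D v < a"
    and ca: "corr_assignment V E (2*a) L C"
  shows "S \<subseteq> V \<Longrightarrow> \<exists>\<phi>. (\<forall>v\<in>S. \<phi> v \<in> L v) \<and>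
            (\<forall>u v. u \<in> S \<longrightarrow> v \<in> S \<longrightarrow> {u,v} \<in> E \<longrightarrow> (\<phi> u, \<phi> v) \<notin> C u v)"
proof (induction "card S" arbitrary: S rule: less_induct)
  case less
  have finV: "finite V" using G by (simp add: simple_graph_def)
  have finS: "finite S" using less.prems finV finite_subset by blast
  have noloop: "{x,x} \<notin> E" for x using G unfolding simple_graph_def
    by (metis doubleton_eq_iff insert_absorb2)
  show ?case
  proof (cases "S = {}")
    case True
    then show ?thesis by auto
  next
    case False
    obtain v where v: "v \<in> S" and dv: "card {u\<in>S. {v,u} \<in> E} < 2*a"
      using degen[OF G ori out less.prems False] by blast
    define S' where "S' = S - {v}"
    have "card S' < card S" unfolding S'_def using v finS by (metis card_Diff1_less)
    then obtain \<phi> where phiL: "\<forall>x\<in>S'. \<phi> x \<in> L x"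
      and phiC: "\<forall>x y. x \<in> S' \<longrightarrow> y \<in> S' \<longrightarrow> {x,y} \<in> E \<longrightarrow> (\<phi> x, \<phi> y) \<notin> C x y"
      using less.hyps[of S'] less.prems unfolding S'_def by blast
    define N where "N = {u\<in>S. {v,u} \<in> E}"
    define Forb where "Forb = (\<Union>u\<in>N. {c. (c, \<phi> u) \<in> C v u})"
    have vV: "v \<in> V" using v less.prems by auto
    have Lv: "finite (L v)" "card (L v) = 2*a" using ca vV unfolding corr_assignment_def by auto
    have finN: "finite N" unfolding N_def using finS by auto
    have sub: "{c. (c, \<phi> u) \<in> C v u} \<subseteq> L v" if "u \<in> N" for u
      using that ca unfolding N_def corr_assignment_def by blast
    have one: "card {c. (c, \<phi> u) \<in> C v u} \<le> 1" if "u \<in> N" for u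
    proof -
      have fin: "finite {c. (c, \<phi> u) \<in> C v u}" using sub[OF that] Lv finite_subset by blast
      have "{v,u} \<in> E" using that unfolding N_def by auto
      then have "\<forall>c c' d. (c, d) \<in> C v u \<and> (c', d) \<in> C v u \<longrightarrow> c = c'"
        using ca unfolding corr_assignment_def by blast
      then show ?thesis using fin by (simp add: card_le_Suc0_iff_eq) blast
    qed
    have "card Forb \<le> (\<Sum>u\<in>N. card {c. (c, \<phi> u) \<in> C v u})"
      unfolding Forb_def using finN by (rule card_UN_le)
    also have "\<dots> \<le> (\<Sum>u\<in>N. 1)" using one by (intro sum_mono) auto
    also have "\<dots> = card N" by simp
    finally have "card Forb < card (L v)" using dv Lv unfolding N_def by simp
    moreover have "Forb \<subseteq> L v" unfolding Forb_def using sub by blast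
    ultimately have "\<not> L v \<subseteq> Forb"
      using Lv(1) card_mono finite_subset by (metis leD)
    then obtain c where c: "c \<in> L v" "c \<notin> Forb" by blast
    define \<psi> where "\<psi> = \<phi>(v := c)"
    show ?thesis
    proof (intro exI[of _ \<psi>] conjI allI impI ballI)
      fix x assume "x \<in> S"
      then show "\<psi> x \<in> L x" unfolding \<psi>_def using phiL c S'_def by auto
    next
      fix x y assume xy: "x \<in> S" "y \<in> S" "{x,y} \<in> E"
      show "(\<psi> x, \<psi> y) \<notin> C x y"
      proof (cases "x = v")
        case True
        then have "y \<noteq> v" using xy noloop by auto
        then have "y \<in> N" unfolding N_def using xy True by auto
        then show ?thesis using c True \<open>y \<noteq> v\<close> unfolding \<psi>_def Forb_def by auto
      next
        case False
        show ?thesis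
        proof (cases "y = v")
          case True
          then have "x \<in> N" unfolding N_def using xy by (auto simp: insert_commute)
          moreover have "C v x = converse (C x v)"
            using ca xy True unfolding corr_assignment_def by blast
          ultimately show ?thesis using c True False unfolding \<psi>_def Forb_def by auto
        next
          case False2: False
          then show ?thesis using phiC xy False unfolding \<psi>_def S'_def by auto
        qed
      qed
    qed
  qed
qed

theorem theorem4:
  fixes V :: "'a set" and E :: "'a set set"
  assumes "simple_graph V E"
  shows "chi_DP V E \<le> 2 * AT V E"
proof -
  let ?P = "\<lambda>k. \<exists>D. orientation E D \<and> (\<forall>v\<in>V. outdeg D v < k) \<and> even_eulerian V D \<noteq> odd_eulerian V D"
  obtain k where "?P k" using exists_AT[OF assms] by blast
  then have "?P (LEAST k. ?P k)" by (rule LeastI)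
  then have "?P (AT V E)" by (simp only: AT_def)
  then obtain D where ori: "orientation E D" and out: "\<forall>v\<in>V. outdeg D v < AT V E" by blast
  have "\<forall>L C. corr_assignment V E (2 * AT V E) L C \<longrightarrow> (\<exists>\<phi>. corr_coloring V E L C \<phi>)"
  proof (intro allI impI)
    fix L C assume ca: "corr_assignment V E (2 * AT V E) L C"
    obtain \<phi> where phiL: "\<forall>v\<in>V. \<phi> v \<in> L v"
      and phiC: "\<forall>u v. u \<in> V \<longrightarrow> v \<in> V \<longrightarrow> {u,v} \<in> E \<longrightarrow> (\<phi> u, \<phi> v) \<notin> C u v"
      using colorable[OF assms ori out ca, of V] by blast
    have "corr_coloring V E L C \<phi>" unfolding corr_coloring_def
    proof (intro conjI allI impI)
      show "\<forall>v\<in>V. \<phi> v \<in> L v" by (rule phiL)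
      fix u v assume e: "{u,v} \<in> E"
      then obtain x y where "x \<in> V" "y \<in> V" "{u,v} = {x,y}" using assms unfolding simple_graph_def by blast
      then have "u \<in> V" "v \<in> V" by (auto simp: doubleton_eq_iff)
      then show "(\<phi> u, \<phi> v) \<notin> C u v" using phiC e by blast
    qed
    then show "\<exists>\<phi>. corr_coloring V E L C \<phi>" by blast
  qed
  then show ?thesis unfolding chi_DP_def by (rule Least_le)
qed

end
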